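(* Let $X,Y$ be finite sets with $Y\neq\emptyset$, let $A\in\{-1,1\}^{X\times Y}$ with $\operatorname{Ldim}(A)=d$, and let $\varepsilon\in(0,1/2)$. Then there exist a function $\sigma:X\to\{-1,1\}$ and a subset $S\subseteq Y$ with $|S|\ge \varepsilon^d|Y|$ such that for every $x\in X$, $$\Pr_{y\in S}\bigl[A(x,y)\ne \sigma(x)\bigr]\le \varepsilon,$$ where $y$ is uniform in $S$.
   Context: A mistake tree of depth $d$ over a domain $X$ is a complete binary tree of depth $d$ in which each internal node $\nu$ is labelled with an element $x(\nu)\in X$, and each edge $e$ from a node to a child is labelled with a sign $\sigma(e)\in\{-1,1\}$, where $-1$ indicates the left child and $+1$ the right child. A matrix $A\in\{-1,1\}^{X\times Y}$ shatters a mistake tree of depth $d$ over $X$ if for every root-to-leaf path $(\nu_1,\dots,\nu_{d+1})$ there is a column $y\in Y$ with $A(x(\nu_i),y)=\sigma(\nu_i\nu_{i+1})$ for all $i\in[d]$. The Littlestone dimension $\operatorname{Ldim}(A)$ is the largest $d$ such that $A$ shatters some mistake tree of depth $d$ over $X$ (a tree of depth $0$ is always shattered when $Y\ne\emptyset$). *)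

theory Defs
  imports Main "HOL-Analysis.Analysis"
begin

text \<open>Binary trees whose internal nodes carry a domain element. The left child
  corresponds to edge sign -1, the right child to edge sign +1.\<close>
datatype 'x mtree = Leaf | Node 'x "'x mtree" "'x mtree"

fun complete_depth :: "'x mtree \<Rightarrow> nat \<Rightarrow> bool" where
  "complete_depth Leaf d = (d = 0)"
| "complete_depth (Node x l r) d =
     (\<exists>d'. d = Suc d' \<and> complete_depth l d' \<and> complete_depth r d')"

fun node_labels :: "'x mtree \<Rightarrow> 'x set" where
  "node_labels Leaf = {}"
| "node_labels (Node x l r) = insert x (node_labels l \<union> node_labels r)"

text \<open>Root-to-leaf paths, recorded as the list of pairs (x(nu_i), sign of edge nu_i nu_(i+1)).\<close>
fun tree_paths :: "'x mtree \<Rightarrow> ('x \<times> int) list set" where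
  "tree_paths Leaf = {[]}"
| "tree_paths (Node x l r) =
     ((#) (x, -1)) ` tree_paths l \<union> ((#) (x, 1)) ` tree_paths r"

definition shatters :: "('x \<Rightarrow> 'y \<Rightarrow> int) \<Rightarrow> 'y set \<Rightarrow> 'x mtree \<Rightarrow> bool" where
  "shatters A Y t \<longleftrightarrow>
     (\<forall>p \<in> tree_paths t. \<exists>y \<in> Y. \<forall>(x, s) \<in> set p. A x y = s)"

definition mistake_tree :: "'x set \<Rightarrow> nat \<Rightarrow> 'x mtree \<Rightarrow> bool" where
  "mistake_tree X d t \<longleftrightarrow> complete_depth t d \<and> node_labels t \<subseteq> X"

definition Ldim :: "'x set \<Rightarrow> 'y set \<Rightarrow> ('x \<Rightarrow> 'y \<Rightarrow> int) \<Rightarrow> nat" where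
  "Ldim X Y A = (GREATEST d. \<exists>t. mistake_tree X d t \<and> shatters A Y t)"

end

theory Submission
  imports Defs
begin

lemma shatters_Node:
  "shatters A S (Node x l r) \<longleftrightarrow>
     shatters A {y\<in>S. A x y = -1} l \<and> shatters A {y\<in>S. A x y = 1} r"
  unfolding shatters_def by (auto simp: ball_Un)

lemma shatters_Leaf: "shatters A S Leaf \<longleftrightarrow> S \<noteq> {}"
  unfolding shatters_def by auto

lemma shatters_bound:
  assumes "shatters A S t" "complete_depth t k" "finite S"
  shows "k < card S"
  using assms
proof (induction t arbitrary: k S)
  case Leaf
  then show ?case by (simp add: shatters_Leaf card_gt_0_iff)
next
  case (Node x l r)
  from Node.prems obtain k' where k: "k = Suc k'" "complete_depth l k'" "complete_depth r k'" by auto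
  have l: "k' < card {y\<in>S. A x y = -1}"
    using Node.IH(1)[of "{y\<in>S. A x y = -1}" k'] Node.prems k by (simp add: shatters_Node)
  have r: "k' < card {y\<in>S. A x y = 1}"
    using Node.IH(2)[of "{y\<in>S. A x y = 1}" k'] Node.prems k by (simp add: shatters_Node)
  have "card {y\<in>S. A x y = -1} + card {y\<in>S. A x y = 1} = card ({y\<in>S. A x y = -1} \<union> {y\<in>S. A x y = 1})"
    by (rule card_Un_disjoint[symmetric]) (use Node.prems in auto)
  also have "\<dots> \<le> card S" by (rule card_mono) (use Node.prems in auto)
  finally show ?case using l r k by simp
qed

lemma majority:
  fixes \<epsilon> :: real
  assumes vals: "\<forall>x \<in> X. \<forall>y \<in> S. A x y \<in> {-1, 1}"
    and nobad: "\<forall>x\<in>X. \<not> (real (card {y\<in>S. A x y = -1}) > \<epsilon> * card S \<and> real (card {y\<in>S. A x y = 1}) > \<epsilon> * card S)"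
  shows "\<exists>\<sigma>::'x\<Rightarrow>int. (\<forall>x \<in> X. \<sigma> x \<in> {-1, 1}) \<and>
           (\<forall>x \<in> X. real (card {y \<in> S. A x y \<noteq> \<sigma> x}) \<le> \<epsilon> * card S)"
proof -
  define \<sigma> where "\<sigma> x = (if real (card {y\<in>S. A x y = -1}) \<le> \<epsilon> * card S then 1 else (-1::int))" for x
  have "real (card {y \<in> S. A x y \<noteq> \<sigma> x}) \<le> \<epsilon> * card S" if x: "x \<in> X" for x
  proof (cases "real (card {y\<in>S. A x y = -1}) \<le> \<epsilon> * card S")
    case True
    have "{y \<in> S. A x y \<noteq> \<sigma> x} = {y\<in>S. A x y = -1}"
      using True vals x by (auto simp: \<sigma>_def)
    then show ?thesis using True by simp
  next
    case False
    have "{y \<in> S. A x y \<noteq> \<sigma> x} = {y\<in>S. A x y = 1}"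
      using False vals x by (auto simp: \<sigma>_def)
    then show ?thesis using False nobad x by force
  qed
  then show ?thesis by (intro exI[of _ \<sigma>]) (auto simp: \<sigma>_def)
qed

lemma main:
  fixes \<epsilon> :: real and A :: "'x \<Rightarrow> 'y \<Rightarrow> int"
  assumes "\<forall>x \<in> X. \<forall>y \<in> S. A x y \<in> {-1, 1}" "finite S" "0 < \<epsilon>"
    and "\<not> (\<exists>t. mistake_tree X (Suc d) t \<and> shatters A S t)" "\<epsilon> \<le> 1"
  shows "\<exists>\<sigma>::'x\<Rightarrow>int. \<exists>S' \<subseteq> S. (\<forall>x \<in> X. \<sigma> x \<in> {-1, 1}) \<and>
           real (card S') \<ge> \<epsilon> ^ d * real (card S) \<and>
           (\<forall>x \<in> X. real (card {y \<in> S'. A x y \<noteq> \<sigma> x}) \<le> \<epsilon> * card S')"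
  using assms
proof (induction d arbitrary: S)
  case 0
  show ?case
  proof (cases "\<exists>x\<in>X. real (card {y\<in>S. A x y = -1}) > \<epsilon> * card S \<and> real (card {y\<in>S. A x y = 1}) > \<epsilon> * card S")
    case True
    then obtain x where x: "x \<in> X" "real (card {y\<in>S. A x y = -1}) > \<epsilon> * card S"
        "real (card {y\<in>S. A x y = 1}) > \<epsilon> * card S" by blast
    have ge: "\<epsilon> * card S \<ge> 0" using 0(3) by simp
    have "card {y\<in>S. A x y = -1} \<noteq> 0" "card {y\<in>S. A x y = 1} \<noteq> 0"
      using x(2,3) ge by linarith+
    then have "{y\<in>S. A x y = -1} \<noteq> {}" "{y\<in>S. A x y = 1} \<noteq> {}"
      by (metis card.empty)+
    then have "shatters A S (Node x Leaf Leaf)" by (simp add: shatters_Node shatters_Leaf)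
    moreover have "mistake_tree X (Suc 0) (Node x Leaf Leaf)" using x by (simp add: mistake_tree_def)
    ultimately show ?thesis using 0(4) by blast
  next
    case False
    then obtain \<sigma> :: "'x \<Rightarrow> int" where "(\<forall>x \<in> X. \<sigma> x \<in> {-1, 1})"
       "(\<forall>x \<in> X. real (card {y \<in> S. A x y \<noteq> \<sigma> x}) \<le> \<epsilon> * card S)"
      using majority[OF 0(1), of \<epsilon>] by blast
    then show ?thesis by (intro exI[of _ \<sigma>] exI[of _ S]) auto
  qed
next
  case (Suc d)
  show ?case
  proof (cases "\<exists>x\<in>X. real (card {y\<in>S. A x y = -1}) > \<epsilon> * card S \<and> real (card {y\<in>S. A x y = 1}) > \<epsilon> * card S")
    case True
    then obtain x where x: "x \<in> X" "real (card {y\<in>S. A x y = -1}) > \<epsilon> * card S"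
        "real (card {y\<in>S. A x y = 1}) > \<epsilon> * card S" by blast
    obtain T where T: "T \<subseteq> S" "real (card T) > \<epsilon> * card S"
      "\<not> (\<exists>t. mistake_tree X (Suc d) t \<and> shatters A T t)"
    proof (cases "\<exists>t. mistake_tree X (Suc d) t \<and> shatters A {y\<in>S. A x y = -1} t")
      case True
      then obtain t1 where t1: "mistake_tree X (Suc d) t1" "shatters A {y\<in>S. A x y = -1} t1" by blast
      show ?thesis
      proof (cases "\<exists>t. mistake_tree X (Suc d) t \<and> shatters A {y\<in>S. A x y = 1} t")
        case True
        then obtain t2 where t2: "mistake_tree X (Suc d) t2" "shatters A {y\<in>S. A x y = 1} t2" by blast
        have "mistake_tree X (Suc (Suc d)) (Node x t1 t2)" "shatters A S (Node x t1 t2)"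
          using t1 t2 x(1) by (auto simp: mistake_tree_def shatters_Node)
        then show ?thesis using Suc.prems(4) by blast
      next
        case False
        show ?thesis by (rule that[of "{y\<in>S. A x y = 1}"]) (use False x in auto)
      qed
    next
      case False
      show ?thesis by (rule that[of "{y\<in>S. A x y = -1}"]) (use False x in auto)
    qed
    have "finite T" using T(1) Suc.prems(2) finite_subset by blast
    then obtain \<sigma> :: "'x\<Rightarrow>int" and S' where S': "S' \<subseteq> T" "(\<forall>x \<in> X. \<sigma> x \<in> {-1, 1})"
        "real (card S') \<ge> \<epsilon> ^ d * real (card T)"
        "(\<forall>x \<in> X. real (card {y \<in> S'. A x y \<noteq> \<sigma> x}) \<le> \<epsilon> * card S')"
      using Suc.IH[of T] Suc.prems T by blast
    have "\<epsilon> ^ Suc d * real (card S) = \<epsilon> ^ d * (\<epsilon> * card S)" by simp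
    also have "\<dots> \<le> \<epsilon> ^ d * real (card T)"
      using T(2) Suc.prems(3) by (intro mult_left_mono) auto
    finally show ?thesis using S' T(1) by (intro exI[of _ \<sigma>] exI[of _ S']) auto
  next
    case False
    then obtain \<sigma> :: "'x \<Rightarrow> int" where "(\<forall>x \<in> X. \<sigma> x \<in> {-1, 1})"
       "(\<forall>x \<in> X. real (card {y \<in> S. A x y \<noteq> \<sigma> x}) \<le> \<epsilon> * card S)"
      using majority[OF Suc.prems(1), of \<epsilon>] by blast
    moreover have "\<epsilon> ^ Suc d * real (card S) \<le> real (card S)"
    proof -
      have "\<epsilon> ^ Suc d \<le> 1"
        using Suc.prems(3,5) by (intro power_le_one) auto
      then show ?thesis using Suc.prems(3) by (intro mult_left_le_one_le) auto
    qed
    ultimately show ?thesis by (intro exI[of _ \<sigma>] exI[of _ S]) auto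
  qed
qed

theorem proposition2p1:
  fixes X :: "'x set" and Y :: "'y set" and A :: "'x \<Rightarrow> 'y \<Rightarrow> int"
    and d :: nat and \<epsilon> :: real
  assumes "finite X" and "finite Y" and "Y \<noteq> {}"
    and "\<forall>x \<in> X. \<forall>y \<in> Y. A x y \<in> {-1, 1}"
    and "Ldim X Y A = d"
    and "0 < \<epsilon>" and "\<epsilon> < 1/2"
  shows "\<exists>\<sigma> :: 'x \<Rightarrow> int. \<exists>S \<subseteq> Y.
           (\<forall>x \<in> X. \<sigma> x \<in> {-1, 1}) \<and>
           real (card S) \<ge> \<epsilon> ^ d * real (card Y) \<and>
           (\<forall>x \<in> X. real (card {y \<in> S. A x y \<noteq> \<sigma> x}) / real (card S) \<le> \<epsilon>)"
proof -
  have bnd: "k \<le> card Y" if "\<exists>t. mistake_tree X k t \<and> shatters A Y t" for k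
  proof -
    from that obtain t where t: "mistake_tree X k t" "shatters A Y t" by blast
    from t(1) have "complete_depth t k" by (simp add: mistake_tree_def)
    from shatters_bound[OF t(2) this assms(2)] show "k \<le> card Y" by simp
  qed
  have nt: "\<not> (\<exists>t. mistake_tree X (Suc d) t \<and> shatters A Y t)"
  proof
    assume ex: "\<exists>t. mistake_tree X (Suc d) t \<and> shatters A Y t"
    have "Suc d \<le> Ldim X Y A"
      unfolding Ldim_def
      by (rule Greatest_le_nat[where P="\<lambda>k. \<exists>t. mistake_tree X k t \<and> shatters A Y t" and b="card Y", OF ex bnd])
    then show False using assms(5) by simp
  qed
  have e1: "\<epsilon> \<le> 1" using assms(7) by simp
  obtain \<sigma> :: "'x\<Rightarrow>int" and S where S: "S \<subseteq> Y" "(\<forall>x \<in> X. \<sigma> x \<in> {-1, 1})"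
      "real (card S) \<ge> \<epsilon> ^ d * real (card Y)"
      "(\<forall>x \<in> X. real (card {y \<in> S. A x y \<noteq> \<sigma> x}) \<le> \<epsilon> * card S)"
    using main[OF assms(4) assms(2) assms(6) nt e1] by blast
  have "\<epsilon> ^ d * real (card Y) > 0" using assms(2,3,6) by (simp add: card_gt_0_iff)
  then have pos: "real (card S) > 0" using S(3) by linarith
  have "\<forall>x \<in> X. real (card {y \<in> S. A x y \<noteq> \<sigma> x}) / real (card S) \<le> \<epsilon>"
  proof
    fix x assume "x \<in> X"
    then have "real (card {y \<in> S. A x y \<noteq> \<sigma> x}) \<le> \<epsilon> * card S" using S(4) by blast
    then show "real (card {y \<in> S. A x y \<noteq> \<sigma> x}) / real (card S) \<le> \<epsilon>"
      using pos by (simp add: pos_divide_le_eq)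
  qed
  then show ?thesis
    using S(1,2,3) by blast
qed

end
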